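(* Let $n\ge 2$, let $a_1,\dots,a_n>0$ and $b_1,\dots,b_n\in\mathbb{R}$, and consider the decoupled linear vector field $\dot x_j=-a_jx_j+b_j$ ($j=1,\dots,n$) on $\mathbb{R}^n$, with equilibrium point $x_e=(b_1/a_1,\dots,b_n/a_n)$. Let $\mu_2=\{x\in\mathbb{R}^n : x_{j,\min}\le x_j\le x_{j,\max},\ j=1,\dots,n\}$ be a box (the phase constraint), and let $\lambda\subseteq\mu_2$ be a jump-set. Define the extended jump-set $$\lambda_{\mathrm{ext}}=\{x\in\mu_2:\ \exists t\ge 0 \text{ such that the solution of the vector field starting at } x \text{ lies in } \lambda \text{ at time } t\}.$$ If the equilibrium point $x_e$ is strictly included in $\lambda$, then $\lambda_{\mathrm{ext}}=\mu_2$; in particular the equilibrium point can be reached.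
   Context: Setting: a phase $l_i$ of a hybrid automaton has continuous dynamics given by the vector field above, and a phase constraint $\mu_2(l_i)=\mu_2$ (a box with faces orthogonal to the coordinate axes). The jump-set from phase $l_i$ to the next phase $l_{i+1}$ is $\lambda=\mu_2(l_i)\cap \mu_3^{-1}(X)$, where $\mu_3$ is the reset map of the transition and $X$ is the target set in phase $l_{i+1}$; in particular $\lambda\subseteq\mu_2$. "Strictly included" means $x_e$ lies in the interior of $\lambda$. *)

theory Defs
  imports "HOL-Analysis.Analysis"
begin

definition lin_field :: "real ^ 'n \<Rightarrow> real ^ 'n \<Rightarrow> real ^ 'n \<Rightarrow> real ^ 'n" where
  "lin_field a b x = (\<chi> j. - a $ j * x $ j + b $ j)"

definition is_solution :: "real ^ 'n \<Rightarrow> real ^ 'n \<Rightarrow> real ^ 'n \<Rightarrow> (real \<Rightarrow> real ^ 'n) \<Rightarrow> bool" where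
  "is_solution a b x phi \<longleftrightarrow> phi 0 = x \<and>
     (\<forall>s. (phi has_vector_derivative lin_field a b (phi s)) (at s))"

definition equilibrium :: "real ^ 'n \<Rightarrow> real ^ 'n \<Rightarrow> real ^ 'n" where
  "equilibrium a b = (\<chi> j. b $ j / a $ j)"

definition box_constraint :: "real ^ 'n \<Rightarrow> real ^ 'n \<Rightarrow> (real ^ 'n) set" where
  "box_constraint xmin xmax = {x. \<forall>j. xmin $ j \<le> x $ j \<and> x $ j \<le> xmax $ j}"

definition ext_jump_set :: "real ^ 'n \<Rightarrow> real ^ 'n \<Rightarrow> (real ^ 'n) set \<Rightarrow> (real ^ 'n) set \<Rightarrow> (real ^ 'n) set" where
  "ext_jump_set a b mu2 lam = {x \<in> mu2. \<exists>t\<ge>0. \<exists>phi. is_solution a b x phi \<and> phi t \<in> lam}"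

end

theory Submission
  imports Defs
begin

lemma vecderiv:
  fixes g :: "'n::finite \<Rightarrow> real \<Rightarrow> real"
  assumes "\<And>j. (g j has_real_derivative g' j) (at s)"
  shows "((\<lambda>t. (\<chi> j. g j t)) has_vector_derivative (\<chi> j. g' j)) (at s)"
  unfolding has_vector_derivative_def
  apply (subst has_derivative_componentwise_within)
  using assms
  apply (auto simp: Basis_vec_def inner_axis has_field_derivative_def)
  by (metis (no_types, lifting) ext mult.commute)

theorem theorem2:
  fixes a b xmin xmax :: "real ^ 'n" and lam :: "(real ^ 'n) set"
  assumes "CARD('n) \<ge> 2"
    and "\<forall>j. a $ j > 0"
    and "lam \<subseteq> box_constraint xmin xmax"
    and "equilibrium a b \<in> interior lam"
  shows "ext_jump_set a b (box_constraint xmin xmax) lam = box_constraint xmin xmax"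
proof
  show "ext_jump_set a b (box_constraint xmin xmax) lam \<subseteq> box_constraint xmin xmax"
    unfolding ext_jump_set_def by auto
next
  show "box_constraint xmin xmax \<subseteq> ext_jump_set a b (box_constraint xmin xmax) lam"
  proof
    fix x assume x: "x \<in> box_constraint xmin xmax"
    define xe where "xe = equilibrium a b"
    define phi where "phi = (\<lambda>t. (\<chi> j. xe $ j + (x $ j - xe $ j) * exp (- (a $ j) * t)))"
    have sol: "is_solution a b x phi"
      unfolding is_solution_def
    proof
      show "phi 0 = x" unfolding phi_def by (simp add: vec_eq_iff)
      show "\<forall>s. (phi has_vector_derivative lin_field a b (phi s)) (at s)"
      proof
        fix s
        have "\<And>j. ((\<lambda>t. xe $ j + (x $ j - xe $ j) * exp (- (a $ j) * t)) has_real_derivative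
              (x $ j - xe $ j) * (exp (- (a $ j) * s) * (- (a $ j)))) (at s)"
          by (auto intro!: derivative_eq_intros)
        then have d: "(phi has_vector_derivative (\<chi> j. (x $ j - xe $ j) * (exp (- (a $ j) * s) * (- (a $ j))))) (at s)"
          unfolding phi_def by (rule vecderiv)
        have "(\<chi> j. (x $ j - xe $ j) * (exp (- (a $ j) * s) * (- (a $ j)))) = lin_field a b (phi s)"
        proof -
          have "\<And>j. a $ j * xe $ j = b $ j" using assms(2) unfolding xe_def equilibrium_def
            by (metis less_irrefl nonzero_mult_div_cancel_left times_divide_eq_right vec_lambda_beta)
          then show ?thesis unfolding lin_field_def phi_def
            by (simp add: vec_eq_iff algebra_simps)
        qed
        with d show "(phi has_vector_derivative lin_field a b (phi s)) (at s)" by simp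
      qed
    qed
    have lim: "(phi \<longlongrightarrow> xe) at_top"
    proof -
      have "\<And>j. ((\<lambda>t. xe $ j + (x $ j - xe $ j) * exp (- (a $ j) * t)) \<longlongrightarrow> xe $ j + (x $ j - xe $ j) * 0) at_top"
      proof -
        fix j
        have f: "filterlim (\<lambda>t. - (a $ j) * t) at_bot at_top"
        proof -
          have "filterlim (\<lambda>t. a $ j * t) at_top at_top"
            using assms(2) by (intro filterlim_tendsto_pos_mult_at_top[OF tendsto_const _ filterlim_ident]) auto
          then show ?thesis by (simp add: filterlim_uminus_at_bot)
        qed
        have "((\<lambda>t. exp (- (a $ j) * t)) \<longlongrightarrow> 0) at_top"
          using filterlim_compose[OF exp_at_bot f] by (simp add: o_def)
        then show "?thesis j" by (intro tendsto_intros)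
      qed
      then have "(phi \<longlongrightarrow> (\<chi> j. xe $ j + (x $ j - xe $ j) * 0)) at_top"
        unfolding phi_def by (rule tendsto_vec_lambda)
      then show ?thesis by simp
    qed
    from assms(4) obtain e where e: "e > 0" "ball xe e \<subseteq> lam"
      unfolding xe_def by (meson mem_interior)
    have "eventually (\<lambda>t. phi t \<in> ball xe e) at_top"
      using lim e(1) by (metis centre_in_ball open_ball tendsto_def)
    then obtain T where "\<And>t. t \<ge> T \<Longrightarrow> phi t \<in> ball xe e"
      unfolding eventually_at_top_linorder by blast
    then have "phi (max T 0) \<in> lam" using e(2) by auto
    then show "x \<in> ext_jump_set a b (box_constraint xmin xmax) lam"
      unfolding ext_jump_set_def using x sol by (auto intro!: exI[of _ "max T 0"])
  qed
qed

end
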